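(* Let $\boldsymbol\theta^*\in\mathbb{R}^d$ and let $(\mathbf a^{\langle t\rangle},\mathbf b^{\langle t\rangle},p^{\langle t\rangle})$ be generated by the iteration in the context. Then for all $t\ge0$, $$\operatorname{sgn}(\langle\mathbf a^{\langle t\rangle},\mathbf b^{\langle t\rangle}\rangle)=\operatorname{sgn}(\langle\mathbf a^{\langle t+1\rangle},\mathbf b^{\langle t+1\rangle}\rangle)=\operatorname{sgn}\big(\tfrac12-p^{\langle t+1\rangle}\big),\qquad \operatorname{sgn}(\langle\mathbf b^{\langle t\rangle},\boldsymbol\theta^*\rangle)=\operatorname{sgn}(\langle\mathbf b^{\langle t+1\rangle},\boldsymbol\theta^*\rangle).$$
   Context: $\operatorname{sgn}(0)=0$, $\operatorname{sgn}(z)=\pm1$ for $\pm z>0$. $\phi_d$ is the density of $N(\mathbf 0,I_d)$; $\mathbf Y\sim\tfrac12N(-\boldsymbol\theta^*,I_d)+\tfrac12N(\boldsymbol\theta^*,I_d)$; $w_d(\mathbf y,\boldsymbol\theta)=\frac{e^{\langle\mathbf y,\boldsymbol\theta\rangle}}{e^{\langle\mathbf y,\boldsymbol\theta\rangle}+e^{-\langle\mathbf y,\boldsymbol\theta\rangle}}$. Given $\mathbf a^{\langle0\rangle},\mathbf b^{\langle0\rangle}\in\mathbb{R}^d$, for $t\ge0$: $\mathbf q^{\langle t+1\rangle}=\mathbb{E}[w_d(\mathbf Y-\mathbf a^{\langle t\rangle},\mathbf b^{\langle t\rangle})\mathbf Y]$, $p^{\langle t+1\rangle}=\mathbb{E}[w_d(\mathbf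 Y-\mathbf a^{\langle t\rangle},\mathbf b^{\langle t\rangle})]$, $\mathbf a^{\langle t+1\rangle}=\frac{\mathbf q^{\langle t+1\rangle}(1-2p^{\langle t+1\rangle})}{2p^{\langle t+1\rangle}(1-p^{\langle t+1\rangle})}$, $\mathbf b^{\langle t+1\rangle}=\frac{\mathbf q^{\langle t+1\rangle}}{2p^{\langle t+1\rangle}(1-p^{\langle t+1\rangle})}$ (re-parameterized Population EM for a two-component Gaussian mixture with identity covariance). *)

theory Defs
  imports "HOL-Analysis.Analysis"
begin

definition std_gauss :: "'a::euclidean_space \<Rightarrow> real" where
  "std_gauss x = (2 * pi) powr (- real DIM('a) / 2) * exp (- (norm x)\<^sup>2 / 2)"

text \<open>Expectation of f(Y) for Y ~ 1/2 N(-th, I) + 1/2 N(th, I).\<close>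
definition mixE :: "'a::euclidean_space \<Rightarrow> ('a \<Rightarrow> 'b::{banach,second_countable_topology}) \<Rightarrow> 'b" where
  "mixE th f = (1/2) *\<^sub>R (\<integral>x. std_gauss (x + th) *\<^sub>R f x \<partial>lborel)
             + (1/2) *\<^sub>R (\<integral>x. std_gauss (x - th) *\<^sub>R f x \<partial>lborel)"

definition wd :: "'a::euclidean_space \<Rightarrow> 'a \<Rightarrow> real" where
  "wd y th = exp (y \<bullet> th) / (exp (y \<bullet> th) + exp (- (y \<bullet> th)))"

definition em_q :: "'a::euclidean_space \<Rightarrow> 'a \<Rightarrow> 'a \<Rightarrow> 'a" where
  "em_q th a b = mixE th (\<lambda>y. wd (y - a) b *\<^sub>R y)"

definition em_p :: "'a::euclidean_space \<Rightarrow> 'a \<Rightarrow> 'a \<Rightarrow> real" where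
  "em_p th a b = mixE th (\<lambda>y. wd (y - a) b)"

end

theory Submission imports Defs "HOL-Probability.Probability" begin


definition gs :: "real \<Rightarrow> 'a::euclidean_space \<Rightarrow> real" where
  "gs s x = (\<Prod>j\<in>Basis. normal_density 0 s (x \<bullet> j))"

lemma norm_sq_basis: "(norm (x::'a::euclidean_space))\<^sup>2 = (\<Sum>j\<in>Basis. (x \<bullet> j)\<^sup>2)"
  unfolding power2_norm_eq_inner euclidean_inner[of x x] by (simp add: power2_eq_square)

lemma gs_formula:
  shows "gs s (x::'a::euclidean_space) = (1 / sqrt (2 * pi * s^2))^DIM('a) * exp (-(norm x)\<^sup>2 / (2 * s^2))"
proof -
  have "gs s x = (\<Prod>j\<in>Basis. (1 / sqrt (2 * pi * s^2)) * exp (-(x \<bullet> j)\<^sup>2 / (2 * s^2)))"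
    unfolding gs_def normal_density_def by simp
  also have "\<dots> = (1 / sqrt (2 * pi * s^2))^DIM('a) * exp (\<Sum>j\<in>Basis. -(x \<bullet> j)\<^sup>2 / (2 * s^2))"
    by (subst prod.distrib) (simp add: exp_sum)
  also have "(\<Sum>j\<in>Basis. -(x \<bullet> j)\<^sup>2 / (2 * s^2)) = -(norm x)\<^sup>2 / (2 * s^2)"
    by (simp add: norm_sq_basis sum_divide_distrib[symmetric] sum_negf)
  finally show ?thesis .
qed

lemma gs_int:
  assumes "s > 0"
  shows "integrable lborel (gs s :: 'a::euclidean_space \<Rightarrow> real)" "integral\<^sup>L lborel (gs s :: 'a \<Rightarrow> real) = 1"
proof -
  have "(\<integral>\<^sup>+x. ennreal (gs s (x::'a)) \<partial>lborel) = (\<integral>\<^sup>+x. (\<Prod>j\<in>Basis. ennreal (normal_density 0 s ((x::'a) \<bullet> j))) \<partial>lborel)"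
    unfolding gs_def by (simp add: prod_ennreal)
  also have "\<dots> = (\<Prod>j\<in>(Basis::'a set). (\<integral>\<^sup>+x. ennreal (normal_density 0 s x) \<partial>lborel))"
    by (rule nn_integral_lborel_prod) auto
  also have "(\<integral>\<^sup>+x. ennreal (normal_density 0 s x) \<partial>lborel) = 1"
    using assms by (subst nn_integral_eq_integral) (auto intro: integrable_normal_density)
  finally have *: "(\<integral>\<^sup>+x. ennreal (gs s (x::'a)) \<partial>lborel) = ennreal 1" by simp
  have m: "gs s \<in> borel_measurable (lborel :: 'a measure)" unfolding gs_def by measurable
  have "integrable lborel (gs s :: 'a \<Rightarrow> real) \<and> integral\<^sup>L lborel (gs s :: 'a \<Rightarrow> real) = 1"
  proof -
    have nn: "AE x in lborel. 0 \<le> gs s (x::'a)" unfolding gs_def by (simp add: prod_nonneg)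
    show ?thesis using nn_integral_eq_integrable[OF m nn zero_le_one] * by blast
  qed
  then show "integrable lborel (gs s :: 'a::euclidean_space \<Rightarrow> real)" "integral\<^sup>L lborel (gs s :: 'a \<Rightarrow> real) = 1" by blast+
qed

lemma std_gauss_gs: "std_gauss (x::'a::euclidean_space) = gs 1 x"
proof -
  have pp: "(0::real) < 2*pi" by simp
  have "1 / sqrt (2*pi) = (2*pi) powr (-(1/2))"
    using pp by (simp only: powr_minus_divide powr_half_sqrt less_imp_le)
  then have "(1 / sqrt (2*pi))^DIM('a) = ((2*pi) powr (-(1/2)))^DIM('a)" by simp
  also have "\<dots> = (2*pi) powr (real DIM('a) * (-(1/2)))"
    using pp by (subst powr_power) auto
  also have "real DIM('a) * (-(1/2)) = - real DIM('a) / 2" by simp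
  finally have e: "(1 / sqrt (2*pi))^DIM('a) = (2*pi) powr (- real DIM('a) / 2)" .
  have g: "gs 1 x = (1 / sqrt (2*pi))^DIM('a) * exp (-(norm x)\<^sup>2 / 2)"
    using gs_formula[of 1 x] by simp
  show ?thesis unfolding g std_gauss_def e by (rule refl)
qed



definition rho :: "real \<Rightarrow> real" where "rho t = exp t / (exp t + exp (-t))"

lemma rho_alt: "rho t = 1 / (1 + exp (-2*t))"
proof -
  have "exp t + exp (-t) = exp t * (1 + exp (-2*t))"
    by (simp add: distrib_left exp_add[symmetric])
  then show ?thesis unfolding rho_def by simp
qed

lemma rho_pos: "0 < rho t" unfolding rho_def by (simp add: add_pos_pos)
lemma rho_lt1: "rho t < 1" unfolding rho_def by (simp add: add_pos_pos)
lemma rho_neg: "rho (-t) = 1 - rho t"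
proof -
  have "exp t + exp (-t) > 0" by (simp add: add_pos_pos)
  then show ?thesis unfolding rho_def by (simp add: field_simps)
qed

lemma rho_strict: assumes "t < t'" shows "rho t < rho t'"
proof -
  have "exp (-2*t') < exp (-2*t)" using assms by simp
  then show ?thesis unfolding rho_alt by (simp add: frac_less2 add_pos_pos)
qed

lemma rho_mono: "t \<le> t' \<Longrightarrow> rho t \<le> rho t'"
  using rho_strict[of t t'] by (cases "t = t'") auto

lemma continuous_on_rho[continuous_intros]:
  assumes "continuous_on S f" shows "continuous_on S (\<lambda>x. rho (f x))"
proof -
  have "\<And>t. exp t + exp (-t) \<noteq> (0::real)" by (metis add_pos_pos exp_gt_zero less_irrefl)
  then show ?thesis unfolding rho_def using assms by (intro continuous_intros) auto
qed

lemma wd_rho: "wd y b = rho (y \<bullet> b)" unfolding wd_def rho_def ..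

lemma g_formula: "std_gauss (x::'a::euclidean_space) = (1 / sqrt (2*pi))^DIM('a) * exp (-(norm x)\<^sup>2 / 2)"
  unfolding std_gauss_gs gs_formula by simp

lemma g_pos: "0 < std_gauss x" unfolding std_gauss_def by simp

lemma continuous_on_g[continuous_intros]:
  assumes "continuous_on S f" shows "continuous_on S (\<lambda>x. std_gauss (f x))"
  unfolding std_gauss_def using assms by (intro continuous_intros) auto

lemma g_neg: "std_gauss (-x) = std_gauss x" unfolding std_gauss_def by simp

lemma g_shift: "std_gauss (z + v) = std_gauss z * exp (-(z \<bullet> v) - (v \<bullet> v)/2)"
proof -
  have "(norm (z+v))\<^sup>2 = (norm z)\<^sup>2 + 2*(z \<bullet> v) + v \<bullet> v"
    by (simp add: power2_norm_eq_inner inner_add_left inner_add_right inner_commute)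
  then have e: "-(norm (z+v))\<^sup>2 / 2 = -(norm z)\<^sup>2 / 2 + (-(z \<bullet> v) - (v \<bullet> v)/2)" by simp
  show ?thesis unfolding std_gauss_def e exp_add by (simp only: mult.assoc)
qed

lemma g_int: "integrable lborel (std_gauss :: 'a::euclidean_space \<Rightarrow> real)"
  "integral\<^sup>L lborel (std_gauss :: 'a \<Rightarrow> real) = 1"
proof -
  have e: "std_gauss = (gs 1 :: 'a \<Rightarrow> real)" by (rule ext) (rule std_gauss_gs)
  show "integrable lborel (std_gauss :: 'a::euclidean_space \<Rightarrow> real)"
    "integral\<^sup>L lborel (std_gauss :: 'a \<Rightarrow> real) = 1" unfolding e using gs_int[of 1] by auto
qed

lemma exp_quarter_int: "integrable lborel (\<lambda>z::'a::euclidean_space. exp (-(norm z)\<^sup>2 / 4))"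
proof -
  have "exp (-(norm z)\<^sup>2 / 4) = (sqrt (4*pi))^DIM('a) * gs (sqrt 2) z" for z :: 'a
  proof -
    have "(sqrt (4*pi))^DIM('a) * (1 / sqrt (2*pi*(sqrt 2)\<^sup>2))^DIM('a) = 1"
      by (simp add: power_mult_distrib[symmetric])
    then show ?thesis unfolding gs_formula by simp
  qed
  then have e: "(\<lambda>z::'a. exp (-(norm z)\<^sup>2 / 4)) = (\<lambda>z. (sqrt (4*pi))^DIM('a) * gs (sqrt 2) z)" by auto
  show ?thesis unfolding e by (intro integrable_mult_right gs_int) simp
qed

lemma g_norm_bound: "std_gauss (z::'a::euclidean_space) * norm z \<le> (1 / sqrt (2*pi))^DIM('a) * exp (-(norm z)\<^sup>2 / 4)"
proof -
  have "norm z \<le> 1 + (norm z)\<^sup>2 / 4"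
    using sum_power2_ge_zero[of "norm z / 2 - 1" 0] by (simp add: power2_eq_square field_simps)
  also have "\<dots> \<le> exp ((norm z)\<^sup>2 / 4)" by (rule exp_ge_add_one_self_aux) simp
  finally have n: "norm z \<le> exp ((norm z)\<^sup>2 / 4)" .
  have "std_gauss z * norm z \<le> (1 / sqrt (2*pi))^DIM('a) * exp (-(norm z)\<^sup>2 / 2) * exp ((norm z)\<^sup>2 / 4)"
    unfolding g_formula by (intro mult_left_mono n) simp
  also have "\<dots> = (1 / sqrt (2*pi))^DIM('a) * exp (-(norm z)\<^sup>2 / 4)"
    by (simp add: mult.assoc exp_add[symmetric])
  finally show ?thesis .
qed



lemma shift_integral:
  fixes h :: "'a::euclidean_space \<Rightarrow> 'b::{banach,second_countable_topology}"
  assumes [measurable]: "h \<in> borel_measurable borel"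
  shows "(\<integral>x. h x \<partial>lborel) = (\<integral>x. h (x + c) \<partial>lborel)"
proof -
  have "(\<integral>x. h x \<partial>(distr lborel borel ((+) c))) = (\<integral>x. h (c + x) \<partial>lborel)"
    by (rule integral_distr) auto
  then show ?thesis by (simp add: lborel_distr_plus add.commute)
qed

lemma shift_integrable:
  fixes h :: "'a::euclidean_space \<Rightarrow> 'b::{banach,second_countable_topology}"
  assumes [measurable]: "h \<in> borel_measurable borel"
  shows "integrable lborel h \<longleftrightarrow> integrable lborel (\<lambda>x. h (x + c))"
proof -
  have "integrable (distr lborel borel ((+) c)) h \<longleftrightarrow> integrable lborel (\<lambda>x. h (c + x))"
    by (rule integrable_distr_eq) auto
  then show ?thesis by (simp add: lborel_distr_plus add.commute)
qed

lemma neg_distr: "distr lborel borel uminus = (lborel :: 'a::euclidean_space measure)"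
  using lborel_affine[of "-1::real" "0::'a"] by (simp add: density_1)

lemma neg_integral:
  fixes h :: "'a::euclidean_space \<Rightarrow> 'b::{banach,second_countable_topology}"
  assumes [measurable]: "h \<in> borel_measurable borel"
  shows "(\<integral>x. h x \<partial>lborel) = (\<integral>x. h (- x) \<partial>lborel)"
proof -
  have "(\<integral>x. h x \<partial>(distr lborel borel uminus)) = (\<integral>x. h (- x) \<partial>lborel)"
    by (rule integral_distr) auto
  then show ?thesis by (simp add: neg_distr)
qed

lemma intg:
  fixes h :: "'a::euclidean_space \<Rightarrow> 'b::{banach,second_countable_topology}"
  assumes c: "continuous_on UNIV h" and b: "\<And>z. norm (h z) \<le> A + B * norm z" and B: "0 \<le> B"
  shows "integrable lborel (\<lambda>z. std_gauss z *\<^sub>R h z)"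
proof -
  define K where "K = (1 / sqrt (2*pi))^DIM('a)"
  have i: "integrable lborel (\<lambda>z::'a. A * std_gauss z + B * (K * exp (-(norm z)\<^sup>2 / 4)))"
  proof (rule Bochner_Integration.integrable_add)
    show "integrable lborel (\<lambda>z::'a. A * std_gauss z)"
      using g_int(1) by (rule Bochner_Integration.integrable_mult_right)
    show "integrable lborel (\<lambda>z::'a. B * (K * exp (-(norm z)\<^sup>2 / 4)))"
      using exp_quarter_int by (intro Bochner_Integration.integrable_mult_right)
  qed
  have [measurable]: "h \<in> borel_measurable borel" by (rule borel_measurable_continuous_onI[OF c])
  have [measurable]: "std_gauss \<in> borel_measurable (borel :: 'a measure)"
    by (rule borel_measurable_continuous_onI) (intro continuous_intros)
  have m: "(\<lambda>z. std_gauss z *\<^sub>R h z) \<in> borel_measurable lborel" by measurable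
  have ae: "AE z in lborel. norm (std_gauss z *\<^sub>R h z) \<le> norm (A * std_gauss z + B * (K * exp (-(norm z)\<^sup>2 / 4)))"
  proof (intro AE_I2)
    fix z :: 'a
    have gp: "0 < std_gauss z" by (rule g_pos)
    have "norm (std_gauss z *\<^sub>R h z) = std_gauss z * norm (h z)" using gp by simp
    also have "\<dots> \<le> std_gauss z * (A + B * norm z)" using gp b by (intro mult_left_mono) auto
    also have "\<dots> = A * std_gauss z + B * (std_gauss z * norm z)" by (simp add: algebra_simps)
    also have "\<dots> \<le> A * std_gauss z + B * (K * exp (-(norm z)\<^sup>2 / 4))"
      using B g_norm_bound[of z] unfolding K_def by (intro add_left_mono mult_left_mono) auto
    finally have le: "norm (std_gauss z *\<^sub>R h z) \<le> A * std_gauss z + B * (K * exp (-(norm z)\<^sup>2 / 4))" .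
    then show "norm (std_gauss z *\<^sub>R h z) \<le> norm (A * std_gauss z + B * (K * exp (-(norm z)\<^sup>2 / 4)))"
      by (smt (verit) norm_ge_zero real_norm_def)
  qed
  show ?thesis by (rule Bochner_Integration.integrable_bound[OF i m ae])
qed

lemma intg_shift:
  fixes h :: "'a::euclidean_space \<Rightarrow> 'b::{banach,second_countable_topology}"
  assumes c: "continuous_on UNIV h" and b: "\<And>z. norm (h z) \<le> A + B * norm z" and B: "0 \<le> B"
  shows "integrable lborel (\<lambda>x. std_gauss (x + v) *\<^sub>R h x)"
proof -
  have "integrable lborel (\<lambda>z. std_gauss z *\<^sub>R h (z - v))"
  proof (rule intg[where A="A + B * norm v" and B=B])
    show "continuous_on UNIV (\<lambda>z. h (z - v))"
      by (rule continuous_on_compose2[OF c]) (auto intro!: continuous_intros)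
    fix z
    have "norm (h (z - v)) \<le> A + B * norm (z - v)" by (rule b)
    also have "\<dots> \<le> A + B * (norm z + norm v)" using B norm_triangle_ineq4[of z v]
      by (intro add_left_mono mult_left_mono) auto
    finally show "norm (h (z - v)) \<le> A + B * norm v + B * norm z" by (simp add: algebra_simps)
  qed (rule B)
  moreover have [measurable]: "h \<in> borel_measurable borel" by (rule borel_measurable_continuous_onI[OF c])
  moreover have [measurable]: "std_gauss \<in> borel_measurable (borel :: 'a measure)"
    by (rule borel_measurable_continuous_onI) (intro continuous_intros)
  ultimately show ?thesis
    using shift_integrable[of "\<lambda>z. std_gauss z *\<^sub>R h (z - v)" v] by simp
qed

lemma posint:
  fixes f :: "'a::euclidean_space \<Rightarrow> real"
  assumes c: "continuous_on UNIV f" and nn: "\<And>x. 0 \<le> f x" and i: "integrable lborel f" and p: "0 < f x0"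
  shows "0 < integral\<^sup>L lborel f"
proof -
  have "0 \<le> integral\<^sup>L lborel f" by (rule integral_nonneg_AE) (simp add: nn)
  moreover have "integral\<^sup>L lborel f \<noteq> 0"
  proof
    assume "integral\<^sup>L lborel f = 0"
    then have "AE x in lborel. f x = 0" using integral_nonneg_eq_0_iff_AE[OF i] nn by auto
    then have "AE x in lebesgue. x \<in> {x. f x = 0}" by (auto intro: AE_completion)
    moreover have "closed {x. f x = 0}"
      using continuous_closed_preimage_constant[OF c closed_UNIV] by simp
    ultimately have "x0 \<in> {x. f x = 0}" using mem_closed_if_AE_lebesgue by blast
    then show False using p by simp
  qed
  ultimately show ?thesis by simp
qed



lemma g_meas[measurable]: "std_gauss \<in> borel_measurable (borel :: 'a::euclidean_space measure)"
  by (rule borel_measurable_continuous_onI) (intro continuous_intros)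

lemma intg_sh:
  fixes h :: "'a::euclidean_space \<Rightarrow> 'b::{banach,second_countable_topology}"
  assumes c: "continuous_on UNIV h" and b: "\<And>z. norm (h z) \<le> A + B * norm z" and B: "0 \<le> B"
  shows "integrable lborel (\<lambda>z. std_gauss z *\<^sub>R h (z + v))"
proof (rule intg[where A="A + B * norm v" and B=B])
  show "continuous_on UNIV (\<lambda>z. h (z + v))"
    by (rule continuous_on_compose2[OF c]) (auto intro!: continuous_intros)
  fix z
  have "norm (h (z + v)) \<le> A + B * norm (z + v)" by (rule b)
  also have "\<dots> \<le> A + B * (norm z + norm v)" using B norm_triangle_ineq[of z v]
    by (intro add_left_mono mult_left_mono) auto
  finally show "norm (h (z + v)) \<le> A + B * norm v + B * norm z" by (simp add: algebra_simps)
qed (rule B)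

lemma mixE_real:
  fixes f :: "'a::euclidean_space \<Rightarrow> real"
  assumes c: "continuous_on UNIV f" and b: "\<And>y. \<bar>f y\<bar> \<le> A + B * norm y" and B: "0 \<le> B"
  shows "mixE th f = (\<integral>z. std_gauss z * ((f (z - th) + f (z + th)) / 2) \<partial>lborel)"
    and "integrable lborel (\<lambda>z. std_gauss z * ((f (z - th) + f (z + th)) / 2))"
proof -
  have [measurable]: "f \<in> borel_measurable borel" by (rule borel_measurable_continuous_onI[OF c])
  have b': "\<And>y. norm (f y) \<le> A + B * norm y" using b by simp
  have i1: "integrable lborel (\<lambda>z. std_gauss z * f (z - th))"
    using intg_sh[OF c b' B, of "-th"] by simp
  have i2: "integrable lborel (\<lambda>z. std_gauss z * f (z + th))"
    using intg_sh[OF c b' B, of "th"] by simp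
  have 1: "(\<integral>x. std_gauss (x + th) *\<^sub>R f x \<partial>lborel) = (\<integral>z. std_gauss z * f (z - th) \<partial>lborel)"
    using shift_integral[of "\<lambda>x. std_gauss (x + th) *\<^sub>R f x" "-th"] by simp
  have 2: "(\<integral>x. std_gauss (x - th) *\<^sub>R f x \<partial>lborel) = (\<integral>z. std_gauss z * f (z + th) \<partial>lborel)"
    using shift_integral[of "\<lambda>x. std_gauss (x - th) *\<^sub>R f x" "th"] by simp
  have e: "(\<lambda>z. std_gauss z * ((f (z - th) + f (z + th)) / 2)) =
      (\<lambda>z. (1/2) * (std_gauss z * f (z - th)) + (1/2) * (std_gauss z * f (z + th)))"
    by (rule ext) (simp add: algebra_simps)
  show "integrable lborel (\<lambda>z. std_gauss z * ((f (z - th) + f (z + th)) / 2))"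
    unfolding e using i1 i2 by (intro Bochner_Integration.integrable_add Bochner_Integration.integrable_mult_right)
  show "mixE th f = (\<integral>z. std_gauss z * ((f (z - th) + f (z + th)) / 2) \<partial>lborel)"
    unfolding e mixE_def 1 2
    using i1 i2 by (subst Bochner_Integration.integral_add) auto
qed

lemma em_q_inner:
  fixes th a b v :: "'a::euclidean_space"
  shows "em_q th a b \<bullet> v = mixE th (\<lambda>y. wd (y - a) b * (y \<bullet> v))"
proof -
  have c: "continuous_on UNIV (\<lambda>x. wd (x - a) b *\<^sub>R x)"
    unfolding wd_rho by (intro continuous_intros)
  have bd: "norm (wd (x - a) b *\<^sub>R x) \<le> 0 + 1 * norm x" for x
    unfolding wd_rho using rho_pos[of "(x - a) \<bullet> b"] rho_lt1[of "(x - a) \<bullet> b"]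
    by (simp add: mult_left_le_one_le)
  have i1: "integrable lborel (\<lambda>x. std_gauss (x + th) *\<^sub>R (wd (x - a) b *\<^sub>R x))"
    by (rule intg_shift[OF c bd]) simp
  have i2: "integrable lborel (\<lambda>x. std_gauss (x + (-th)) *\<^sub>R (wd (x - a) b *\<^sub>R x))"
    by (rule intg_shift[OF c bd]) simp
  have i2': "integrable lborel (\<lambda>x. std_gauss (x - th) *\<^sub>R (wd (x - a) b *\<^sub>R x))"
    using i2 by simp
  show ?thesis
    unfolding em_q_def mixE_def inner_add_left inner_scaleR_left
    using i1 i2' by (simp add: integral_inner_left[symmetric] mult.assoc)
qed

lemma symm:
  fixes F :: "'a::euclidean_space \<Rightarrow> real"
  assumes c: "continuous_on UNIV F" and b: "\<And>y. \<bar>F y\<bar> \<le> A + B * norm y" and B: "0 \<le> B"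
  shows "(\<integral>z. std_gauss z * F z \<partial>lborel) = (\<integral>z. std_gauss z * ((F z + F (- z)) / 2) \<partial>lborel)"
proof -
  have [measurable]: "F \<in> borel_measurable borel" by (rule borel_measurable_continuous_onI[OF c])
  have b1: "\<And>y. norm (F y) \<le> A + B * norm y" using b by simp
  have b2: "\<And>y. norm (F (- y)) \<le> A + B * norm y" using b by (metis norm_minus_cancel real_norm_def)
  have i1: "integrable lborel (\<lambda>z. std_gauss z * F z)" using intg[OF c b1 B] by simp
  have c2: "continuous_on UNIV (\<lambda>z. F (- z))"
    by (rule continuous_on_compose2[OF c]) (auto intro!: continuous_intros)
  have i2: "integrable lborel (\<lambda>z. std_gauss z * F (- z))" using intg[OF c2 b2 B] by simp
  have n: "(\<integral>z. std_gauss z * F z \<partial>lborel) = (\<integral>z. std_gauss z * F (- z) \<partial>lborel)"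
    using neg_integral[of "\<lambda>z. std_gauss z * F z"] by (simp add: g_neg)
  have e: "(\<lambda>z. std_gauss z * ((F z + F (- z)) / 2)) =
      (\<lambda>z. (1/2) * (std_gauss z * F z) + (1/2) * (std_gauss z * F (- z)))"
    by (rule ext) (simp add: algebra_simps)
  show ?thesis unfolding e using i1 i2 n by (subst Bochner_Integration.integral_add) auto
qed



lemma small_lin_bound:
  fixes T C :: real
  assumes C: "0 \<le> C" and h: "\<And>t. 0 < t \<Longrightarrow> t \<le> 1 \<Longrightarrow> - (C * t) \<le> T"
  shows "0 \<le> T"
proof (rule ccontr)
  assume "\<not> 0 \<le> T" then have T: "T < 0" by simp
  define t where "t = min 1 (-T / (C + 1))"
  have t0: "0 < t" using T C unfolding t_def by (simp add: field_simps)
  have t1: "t \<le> 1" unfolding t_def by simp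
  have "C * t \<le> C * (-T / (C + 1))" using C unfolding t_def by (intro mult_left_mono) auto
  also have "\<dots> < -T" using T C by (simp add: field_simps)
  finally have "- (C * t) > T" by simp
  then show False using h[OF t0 t1] by simp
qed

lemma exp_m1_le: fixes y :: real assumes "0 \<le> y" shows "exp y - 1 \<le> y * exp y"
proof -
  have "1 - y \<le> exp (-y)" using exp_ge_add_one_self[of "-y"] by simp
  then have "(1 - y) * exp y \<le> exp (-y) * exp y" by (intro mult_right_mono) auto
  then show ?thesis by (simp add: exp_minus field_simps)
qed

lemma tilt:
  fixes th b :: "'a::euclidean_space" and G :: "real \<Rightarrow> real"
  assumes Gc: "continuous_on UNIV G" and Gm: "mono G" and G0: "\<And>t. 0 \<le> G t" and GM: "\<And>t. G t \<le> M"
    and s: "0 \<le> b \<bullet> th"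
  shows "0 \<le> (\<integral>z. std_gauss z * ((z \<bullet> th) * G (z \<bullet> b)) \<partial>lborel)"
proof -
  define T where "T = (\<integral>z. std_gauss z * ((z \<bullet> th) * G (z \<bullet> b)) \<partial>lborel)"
  define F0 where "F0 = (\<integral>z. std_gauss z * G (z \<bullet> b) \<partial>lborel)"
  define k where "k = th \<bullet> th"
  have M0: "0 \<le> M" using G0[of 0] GM[of 0] by simp
  have k0: "0 \<le> k" unfolding k_def by simp
  have cG: "continuous_on UNIV (\<lambda>z::'a. G (z \<bullet> b))"
    by (rule continuous_on_compose2[OF Gc]) (auto intro!: continuous_intros)
  have bG: "norm (G (z \<bullet> b)) \<le> M + 0 * norm z" for z :: 'a using G0 GM by simp
  have iF0: "integrable lborel (\<lambda>z::'a. std_gauss z * G (z \<bullet> b))"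
    using intg[OF cG bG] by simp
  have F0nn: "0 \<le> F0" unfolding F0_def
    by (rule integral_nonneg_AE) (simp add: G0 g_pos less_imp_le)
  have cT: "continuous_on UNIV (\<lambda>z::'a. (z \<bullet> th) * G (z \<bullet> b))"
    by (intro continuous_intros cG)
  have bT: "norm ((z \<bullet> th) * G (z \<bullet> b)) \<le> 0 + (norm th * M) * norm z" for z :: 'a
  proof -
    have "norm ((z \<bullet> th) * G (z \<bullet> b)) = \<bar>z \<bullet> th\<bar> * G (z \<bullet> b)" using G0 by (simp add: abs_mult)
    also have "\<dots> \<le> (norm z * norm th) * M"
      using Cauchy_Schwarz_ineq2[of z th] G0 GM by (intro mult_mono) auto
    finally show ?thesis by (simp add: algebra_simps)
  qed
  have iT: "integrable lborel (\<lambda>z::'a. std_gauss z * ((z \<bullet> th) * G (z \<bullet> b)))"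
    using intg[OF cT bT] M0 by simp
  have key: "- (((k/2) * exp (k/2) * F0) * t) \<le> T" if t0: "0 < t" and t1: "t \<le> 1" for t
  proof -
    define E where "E = exp (t\<^sup>2 * k / 2)"
    have E0: "0 < E" unfolding E_def by simp
    have ish: "integrable lborel (\<lambda>z::'a. std_gauss (z + t *\<^sub>R th) * G (z \<bullet> b))"
      using intg_shift[OF cG bG, of "t *\<^sub>R th"] by simp
    have pw: "std_gauss z * G (z \<bullet> b) - t * (std_gauss z * ((z \<bullet> th) * G (z \<bullet> b)))
        \<le> E * (std_gauss (z + t *\<^sub>R th) * G (z \<bullet> b))" for z :: 'a
    proof -
      have gs': "std_gauss (z + t *\<^sub>R th) = std_gauss z * exp (-(t * (z \<bullet> th)) - t\<^sup>2 * k / 2)"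
        unfolding g_shift k_def by (simp add: power2_eq_square algebra_simps)
      have ee: "E * exp (-(t * (z \<bullet> th)) - t\<^sup>2 * k / 2) = exp (-(t * (z \<bullet> th)))"
        unfolding E_def exp_add[symmetric] by (simp add: algebra_simps)
      have e: "E * std_gauss (z + t *\<^sub>R th) = std_gauss z * exp (-(t * (z \<bullet> th)))"
        unfolding gs' ee[symmetric] by (simp add: ac_simps)
      have "1 - t * (z \<bullet> th) \<le> exp (-(t * (z \<bullet> th)))" using exp_ge_add_one_self[of "-(t * (z \<bullet> th))"] by simp
      then have "(std_gauss z * G (z \<bullet> b)) * (1 - t * (z \<bullet> th)) \<le> (std_gauss z * G (z \<bullet> b)) * exp (-(t * (z \<bullet> th)))"
        using G0 g_pos[of z] by (intro mult_left_mono) auto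
      moreover have "E * (std_gauss (z + t *\<^sub>R th) * G (z \<bullet> b)) = (std_gauss z * G (z \<bullet> b)) * exp (-(t * (z \<bullet> th)))"
        by (simp only: mult.assoc[symmetric] e) (simp add: ac_simps)
      moreover have "(std_gauss z * G (z \<bullet> b)) * (1 - t * (z \<bullet> th)) = std_gauss z * G (z \<bullet> b) - t * (std_gauss z * ((z \<bullet> th) * G (z \<bullet> b)))"
        by (simp add: algebra_simps)
      ultimately show ?thesis by linarith
    qed
    have "F0 - t * T = (\<integral>z. std_gauss z * G (z \<bullet> b) - t * (std_gauss z * ((z \<bullet> th) * G (z \<bullet> b))) \<partial>lborel)"
      unfolding F0_def T_def using iF0 iT by simp
    also have "\<dots> \<le> (\<integral>z. E * (std_gauss (z + t *\<^sub>R th) * G (z \<bullet> b)) \<partial>lborel)"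
      using iF0 iT ish pw by (intro integral_mono) auto
    also have "\<dots> = E * (\<integral>z. std_gauss (z + t *\<^sub>R th) * G (z \<bullet> b) \<partial>lborel)" by simp
    also have "(\<integral>z. std_gauss (z + t *\<^sub>R th) * G (z \<bullet> b) \<partial>lborel) = (\<integral>z. std_gauss z * G (z \<bullet> b - t * (b \<bullet> th)) \<partial>lborel)"
    proof -
      have [measurable]: "(\<lambda>z::'a. G (z \<bullet> b)) \<in> borel_measurable borel"
        by (rule borel_measurable_continuous_onI[OF cG])
      have r: "\<And>z::'a. (z - t *\<^sub>R th) \<bullet> b = z \<bullet> b - t * (b \<bullet> th)"
        by (simp add: inner_diff_left inner_commute[of th b])
      show ?thesis using shift_integral[of "\<lambda>z. std_gauss (z + t *\<^sub>R th) * G (z \<bullet> b)" "- (t *\<^sub>R th)"]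
        by (simp add: r)
    qed
    also have "(\<integral>z. std_gauss z * G (z \<bullet> b - t * (b \<bullet> th)) \<partial>lborel) \<le> F0"
    proof -
      have cG2: "continuous_on UNIV (\<lambda>z::'a. G (z \<bullet> b - t * (b \<bullet> th)))"
        by (rule continuous_on_compose2[OF Gc]) (auto intro!: continuous_intros)
      have bG2: "norm (G (z \<bullet> b - t * (b \<bullet> th))) \<le> M + 0 * norm z" for z :: 'a using G0 GM by simp
      have i2: "integrable lborel (\<lambda>z::'a. std_gauss z * G (z \<bullet> b - t * (b \<bullet> th)))"
        using intg[OF cG2 bG2] by simp
      have "G (z \<bullet> b - t * (b \<bullet> th)) \<le> G (z \<bullet> b)" for z :: 'a
        using s t0 by (intro monoD[OF Gm]) (simp add: mult_nonneg_nonneg)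
      then show ?thesis unfolding F0_def using i2 iF0
        by (intro integral_mono) (auto intro!: mult_left_mono simp: g_pos less_imp_le)
    qed
    finally have A: "F0 - t * T \<le> E * F0" using E0 by (simp add: mult_left_mono)
    have "E - 1 \<le> (t\<^sup>2 * k / 2) * E" unfolding E_def by (rule exp_m1_le) (simp add: k0)
    also have "\<dots> \<le> (t * (k/2)) * exp (k/2) * t"
    proof -
      have t2: "t\<^sup>2 \<le> 1" using t0 t1 by (simp add: power_le_one)
      have "t\<^sup>2 * k / 2 \<le> k / 2" using t2 k0 by (simp add: mult_left_le_one_le)
      then have Ek: "E \<le> exp (k/2)" unfolding E_def by simp
      have "(t\<^sup>2 * k / 2) * E = (t\<^sup>2) * ((k/2) * E)" by simp
      also have "\<dots> \<le> (t\<^sup>2) * ((k/2) * exp (k/2))"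
        using Ek k0 by (intro mult_left_mono) auto
      also have "\<dots> = (t * (k/2)) * exp (k/2) * t" by (simp add: power2_eq_square)
      finally show ?thesis .
    qed
    finally have B: "E - 1 \<le> (t * (k/2)) * exp (k/2) * t" .
    have "- (t * T) \<le> (E - 1) * F0" using A by (simp add: algebra_simps)
    also have "\<dots> \<le> ((t * (k/2)) * exp (k/2) * t) * F0" using B F0nn by (rule mult_right_mono)
    finally have "- (t * T) \<le> t * (((k/2) * exp (k/2) * F0) * t)" by (simp add: algebra_simps)
    then have "t * (- (((k/2) * exp (k/2) * F0) * t)) \<le> t * T" by (simp add: algebra_simps)
    then show ?thesis using mult_le_cancel_left_pos[OF t0] by blast
  qed
  have "0 \<le> T" by (rule small_lin_bound[OF _ key]) (use k0 F0nn in simp)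
  then show ?thesis unfolding T_def .
qed



lemma intgR:
  fixes F :: "'a::euclidean_space \<Rightarrow> real"
  assumes c: "continuous_on UNIV F" and b: "\<And>y. \<bar>F y\<bar> \<le> A + B * norm y" and B: "0 \<le> B"
  shows "integrable lborel (\<lambda>z. std_gauss z * F z)"
proof -
  have b1: "\<And>y. norm (F y) \<le> A + B * norm y" using b by simp
  show ?thesis using intg[OF c b1 B] by simp
qed

lemma rho_abs: "\<bar>rho t\<bar> \<le> 1 + 0 * norm (y::'a::euclidean_space)"
  using rho_pos[of t] rho_lt1[of t] by simp

lemma rho_negE: "rho (- x) = 1 - rho x" by (rule rho_neg)

lemma p_props:
  fixes th a b :: "'a::euclidean_space"
  shows "0 < em_p th a b" "em_p th a b < 1" "sgn (1/2 - em_p th a b) = sgn (a \<bullet> b)"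
proof -
  define P where "P z = (rho ((z - th - a) \<bullet> b) + rho ((z + th - a) \<bullet> b)) / 2" for z :: 'a
  have cf: "continuous_on UNIV (\<lambda>y::'a. rho ((y - a) \<bullet> b))" by (intro continuous_intros)
  have bf: "\<And>y::'a. \<bar>rho ((y - a) \<bullet> b)\<bar> \<le> 1 + 0 * norm y" by (rule rho_abs)
  have rep: "em_p th a b = (\<integral>z. std_gauss z * P z \<partial>lborel)"
    unfolding em_p_def wd_rho P_def using mixE_real(1)[OF cf bf] by simp
  have cP: "continuous_on UNIV P" unfolding P_def[abs_def] by (intro continuous_intros) auto
  have P01: "0 < P z" "P z < 1" for z
    unfolding P_def using rho_pos[of "(z - th - a) \<bullet> b"] rho_lt1[of "(z - th - a) \<bullet> b"]
      rho_pos[of "(z + th - a) \<bullet> b"] rho_lt1[of "(z + th - a) \<bullet> b"] by auto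
  have bP: "\<bar>P z\<bar> \<le> 1 + 0 * norm z" for z using P01[of z] by simp
  have iP: "integrable lborel (\<lambda>z. std_gauss z * P z)" by (rule intgR[OF cP bP]) simp
  show "0 < em_p th a b" unfolding rep
    by (rule posint[of _ 0]) (auto intro!: continuous_intros cP iP simp: g_pos P01 less_imp_le)
  have c1: "continuous_on UNIV (\<lambda>z. 1 - P z)" by (intro continuous_intros cP)
  have b1: "\<bar>1 - P z\<bar> \<le> 1 + 0 * norm z" for z using P01[of z] by simp
  have i1: "integrable lborel (\<lambda>z. std_gauss z * (1 - P z))" by (rule intgR[OF c1 b1]) simp
  have "(\<integral>z. std_gauss z * (1 - P z) \<partial>lborel) = (\<integral>z. std_gauss z - std_gauss z * P z \<partial>lborel)"
    by (simp add: right_diff_distrib)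
  also have "\<dots> = integral\<^sup>L lborel (std_gauss :: 'a \<Rightarrow> real) - (\<integral>z. std_gauss z * P z \<partial>lborel)"
    by (rule Bochner_Integration.integral_diff[OF g_int(1) iP])
  finally have "1 - em_p th a b = (\<integral>z. std_gauss z * (1 - P z) \<partial>lborel)"
    unfolding rep g_int(2) by simp
  moreover have "0 < (\<integral>z. std_gauss z * (1 - P z) \<partial>lborel)"
    by (rule posint[of _ 0]) (auto intro!: continuous_intros cP i1 simp: g_pos P01 less_imp_le)
  ultimately show "em_p th a b < 1" by simp
  define u where "u z = z \<bullet> b" for z :: 'a
  define s where "s = th \<bullet> b"
  define c where "c = a \<bullet> b"
  define D where "D z = (rho (u z + s + c) - rho (u z + s - c) + rho (u z - s + c) - rho (u z - s - c)) / 4" for z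
  have PD: "((1/2 - P z) + (1/2 - P (- z))) / 2 = D z" for z
  proof -
    have e1: "(z - th - a) \<bullet> b = u z - s - c" "(z + th - a) \<bullet> b = u z + s - c"
      "(- z - th - a) \<bullet> b = - (u z + s + c)" "(- z + th - a) \<bullet> b = - (u z - s + c)"
      unfolding u_def s_def c_def by (simp_all add: inner_diff_left inner_add_left)
    show ?thesis unfolding D_def P_def e1 rho_negE by (simp add: field_simps)
  qed
  have c2: "continuous_on UNIV (\<lambda>z. 1/2 - P z)" by (intro continuous_intros cP)
  have b2: "\<bar>1/2 - P z\<bar> \<le> 1 + 0 * norm z" for z using P01[of z] by simp
  have i2: "integrable lborel (\<lambda>z. std_gauss z * (1/2 - P z))" by (rule intgR[OF c2 b2]) simp
  have ig2: "integrable lborel (\<lambda>z::'a. (1/2) * std_gauss z)"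
    using g_int(1) by (rule Bochner_Integration.integrable_mult_right)
  have "(\<integral>z. std_gauss z * (1/2 - P z) \<partial>lborel) = (\<integral>z. (1/2) * std_gauss z - std_gauss z * P z \<partial>lborel)"
    by (simp add: right_diff_distrib)
  also have "\<dots> = (\<integral>z. (1/2) * std_gauss (z::'a) \<partial>lborel) - (\<integral>z. std_gauss z * P z \<partial>lborel)"
    by (rule Bochner_Integration.integral_diff[OF ig2 iP])
  also have "(\<integral>z. (1/2) * std_gauss (z::'a) \<partial>lborel) = (1/2::real) * integral\<^sup>L lborel (std_gauss :: 'a \<Rightarrow> real)"
    by (rule Bochner_Integration.integral_mult_right) (rule g_int(1))
  finally have "1/2 - em_p th a b = (\<integral>z. std_gauss z * (1/2 - P z) \<partial>lborel)"
    unfolding rep g_int(2) by simp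
  also have "\<dots> = (\<integral>z. std_gauss z * D z \<partial>lborel)"
    using symm[OF c2 b2] by (simp only: PD)
  finally have hD: "1/2 - em_p th a b = (\<integral>z. std_gauss z * D z \<partial>lborel)" .
  have cD: "continuous_on UNIV D" unfolding D_def[abs_def] u_def by (intro continuous_intros) auto
  have bD: "\<bar>D z\<bar> \<le> 1 + 0 * norm z" for z
    unfolding D_def using rho_pos[of "u z + s + c"] rho_lt1[of "u z + s + c"]
      rho_pos[of "u z + s - c"] rho_lt1[of "u z + s - c"]
      rho_pos[of "u z - s + c"] rho_lt1[of "u z - s + c"]
      rho_pos[of "u z - s - c"] rho_lt1[of "u z - s - c"] by (simp add: abs_le_iff)
  have iD: "integrable lborel (\<lambda>z. std_gauss z * D z)" by (rule intgR[OF cD bD]) simp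
  consider "0 < c" | "c < 0" | "c = 0" by linarith
  then show "sgn (1/2 - em_p th a b) = sgn (a \<bullet> b)"
  proof cases
    case 1
    have "D z > 0" for z unfolding D_def
      using rho_strict[of "u z + s - c" "u z + s + c"] rho_strict[of "u z - s - c" "u z - s + c"] 1 by simp
    then have "0 < (\<integral>z. std_gauss z * D z \<partial>lborel)"
      by (intro posint[of _ 0] continuous_intros cD iD) (auto simp: g_pos less_imp_le)
    then show ?thesis using 1 hD c_def by simp
  next
    case 2
    have "- D z > 0" for z unfolding D_def
      using rho_strict[of "u z + s + c" "u z + s - c"] rho_strict[of "u z - s + c" "u z - s - c"] 2 by simp
    then have neg: "\<And>z. std_gauss z * D z < 0" by (simp add: g_pos mult_pos_neg)
    have "0 < (\<integral>z. - (std_gauss z * D z) \<partial>lborel)"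
    proof (rule posint[of _ 0])
      show "continuous_on UNIV (\<lambda>z. - (std_gauss z * D z))" by (intro continuous_intros cD)
      show "integrable lborel (\<lambda>z. - (std_gauss z * D z))" using iD by simp
    qed (use neg in \<open>auto simp: less_imp_le\<close>)
    then show ?thesis using 2 hD c_def by simp
  next
    case 3
    have "D z = 0" for z unfolding D_def 3 by simp
    then have "1/2 - em_p th a b = 0" using hD by simp
    then have "sgn (1/2 - em_p th a b) = 0" by (metis sgn_zero)
    then show ?thesis using 3 c_def by simp
  qed
qed



lemma psi_nonneg: "0 \<le> x * (rho (x - c) - rho (- x - c))"
proof (cases "0 \<le> x")
  case True
  then have "rho (- x - c) \<le> rho (x - c)" by (intro rho_mono) simp
  then show ?thesis using True by simp
next
  case False
  then have "rho (x - c) \<le> rho (- x - c)" by (intro rho_mono) simp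
  then show ?thesis using False by (simp add: mult_nonpos_nonpos)
qed

lemma psi_pos: "0 < x \<Longrightarrow> 0 < x * (rho (x - c) - rho (- x - c))"
  using rho_strict[of "- x - c" "x - c"] by simp

lemma qb_pos:
  fixes th a b :: "'a::euclidean_space"
  assumes b0: "b \<noteq> 0"
  shows "0 < em_q th a b \<bullet> b"
proof -
  define f where "f y = rho ((y - a) \<bullet> b) * (y \<bullet> b)" for y :: 'a
  have cf: "continuous_on UNIV f" unfolding f_def[abs_def] by (intro continuous_intros)
  have bf: "\<bar>f y\<bar> \<le> 0 + norm b * norm y" for y
  proof -
    have "\<bar>f y\<bar> = rho ((y - a) \<bullet> b) * \<bar>y \<bullet> b\<bar>" unfolding f_def using rho_pos[of "(y - a) \<bullet> b"] by (simp add: abs_mult)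
    also have "\<dots> \<le> 1 * (norm y * norm b)"
      using rho_pos rho_lt1 Cauchy_Schwarz_ineq2[of y b] by (intro mult_mono) (auto simp: less_imp_le)
    finally show ?thesis by (simp add: mult.commute)
  qed
  define Q where "Q z = (f (z - th) + f (z + th)) / 2" for z
  have rep: "em_q th a b \<bullet> b = (\<integral>z. std_gauss z * Q z \<partial>lborel)"
    unfolding em_q_inner wd_rho Q_def using mixE_real(1)[OF cf bf] by (simp add: f_def)
  have cQ: "continuous_on UNIV Q" unfolding Q_def[abs_def] f_def
    by (intro continuous_intros) auto
  have bQ: "\<bar>Q z\<bar> \<le> norm b * norm th + norm b * norm z" for z
  proof -
    have "\<bar>f (z - th)\<bar> \<le> norm b * (norm z + norm th)"
      using bf[of "z - th"] norm_triangle_ineq4[of z th] by (smt (verit) mult_left_mono norm_ge_zero)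
    moreover have "\<bar>f (z + th)\<bar> \<le> norm b * (norm z + norm th)"
      using bf[of "z + th"] norm_triangle_ineq[of z th] by (smt (verit) mult_left_mono norm_ge_zero)
    ultimately show ?thesis unfolding Q_def by (simp add: algebra_simps)
  qed
  define u where "u z = z \<bullet> b" for z :: 'a
  define s where "s = th \<bullet> b"
  define c where "c = a \<bullet> b"
  define psi where "psi x = x * (rho (x - c) - rho (- x - c))" for x
  have QQ: "(Q z + Q (- z)) / 2 = (psi (u z + s) + psi (u z - s)) / 4" for z
  proof -
    have e: "(z - th - a) \<bullet> b = (u z - s) - c" "(z + th - a) \<bullet> b = (u z + s) - c"
      "(- z - th - a) \<bullet> b = - (u z + s) - c" "(- z + th - a) \<bullet> b = - (u z - s) - c"
      "(z - th) \<bullet> b = u z - s" "(z + th) \<bullet> b = u z + s"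
      "(- z - th) \<bullet> b = - (u z + s)" "(- z + th) \<bullet> b = - (u z - s)"
      unfolding u_def s_def c_def by (simp_all add: inner_diff_left inner_add_left)
    define A where "A = rho ((u z - s) - c)"
    define B where "B = rho ((u z + s) - c)"
    define C where "C = rho (- (u z + s) - c)"
    define D where "D = rho (- (u z - s) - c)"
    have q1: "Q z = (A * (u z - s) + B * (u z + s)) / 2"
      unfolding Q_def f_def e A_def B_def by (rule refl)
    have q2: "Q (- z) = (C * (- (u z + s)) + D * (- (u z - s))) / 2"
      unfolding Q_def f_def e C_def D_def by (rule refl)
    have p1: "psi (u z + s) = (u z + s) * (B - C)" unfolding psi_def B_def C_def by (rule refl)
    have p2: "psi (u z - s) = (u z - s) * (A - D)" unfolding psi_def A_def D_def by (rule refl)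
    show ?thesis unfolding q1 q2 p1 p2 by (simp add: field_simps)
  qed
  have bQ': "\<bar>Q z\<bar> \<le> norm b * norm th + norm b * norm z" for z by (rule bQ)
  have "em_q th a b \<bullet> b = (\<integral>z. std_gauss z * ((Q z + Q (- z)) / 2) \<partial>lborel)"
    unfolding rep by (rule symm[OF cQ bQ']) simp
  also have "\<dots> = (\<integral>z. std_gauss z * ((psi (u z + s) + psi (u z - s)) / 4) \<partial>lborel)"
    by (simp only: QQ)
  finally have h: "em_q th a b \<bullet> b = (\<integral>z. std_gauss z * ((psi (u z + s) + psi (u z - s)) / 4) \<partial>lborel)" .
  have cP: "continuous_on UNIV (\<lambda>z. (psi (u z + s) + psi (u z - s)) / 4)"
    unfolding psi_def u_def by (intro continuous_intros) auto
  have bP: "\<bar>(psi (u z + s) + psi (u z - s)) / 4\<bar> \<le> norm b * norm th + norm b * norm z" for z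
  proof -
    have "\<bar>(Q z + Q (- z)) / 2\<bar> \<le> norm b * norm th + norm b * norm z"
      using bQ[of z] bQ[of "- z"] by simp
    then show ?thesis using QQ[of z] by simp
  qed
  have iP: "integrable lborel (\<lambda>z. std_gauss z * ((psi (u z + s) + psi (u z - s)) / 4))"
    by (rule intgR[OF cP bP]) simp
  define z0 where "z0 = ((\<bar>s\<bar> + 1) / (b \<bullet> b)) *\<^sub>R b"
  have bb: "0 < b \<bullet> b" using b0 by simp
  have uz0: "u z0 = \<bar>s\<bar> + 1" unfolding z0_def u_def using bb by simp
  have p0: "0 < psi (u z0 + s)" unfolding psi_def by (rule psi_pos) (simp add: uz0)
  have p1: "0 \<le> psi (u z0 - s)" unfolding psi_def by (rule psi_nonneg)
  show ?thesis unfolding h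
  proof (rule posint[of _ z0])
    show "continuous_on UNIV (\<lambda>z. std_gauss z * ((psi (u z + s) + psi (u z - s)) / 4))"
      by (intro continuous_intros cP)
    show "0 \<le> std_gauss x * ((psi (u x + s) + psi (u x - s)) / 4)" for x
    proof -
      have "0 \<le> psi y" for y unfolding psi_def by (rule psi_nonneg)
      then show ?thesis using g_pos[of x] by (simp add: less_imp_le)
    qed
    show "0 < std_gauss z0 * ((psi (u z0 + s) + psi (u z0 - s)) / 4)"
      using p0 p1 g_pos[of z0] by simp
  qed (rule iP)
qed



lemma qth_sgn:
  fixes th a b :: "'a::euclidean_space"
  shows "sgn (em_q th a b \<bullet> th) = sgn (th \<bullet> b)"
proof -
  define f where "f y = rho ((y - a) \<bullet> b) * (y \<bullet> th)" for y :: 'a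
  have cf: "continuous_on UNIV f" unfolding f_def[abs_def] by (intro continuous_intros)
  have bf: "\<bar>f y\<bar> \<le> 0 + norm th * norm y" for y
  proof -
    have "\<bar>f y\<bar> = rho ((y - a) \<bullet> b) * \<bar>y \<bullet> th\<bar>" unfolding f_def using rho_pos[of "(y - a) \<bullet> b"] by (simp add: abs_mult)
    also have "\<dots> \<le> 1 * (norm y * norm th)"
      using rho_pos rho_lt1 Cauchy_Schwarz_ineq2[of y th] by (intro mult_mono) (auto simp: less_imp_le)
    finally show ?thesis by (simp add: mult.commute)
  qed
  have rep: "em_q th a b \<bullet> th = (\<integral>z. std_gauss z * ((f (z - th) + f (z + th)) / 2) \<partial>lborel)"
    unfolding em_q_inner wd_rho using mixE_real(1)[OF cf bf] by (simp add: f_def)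
  define s where "s = th \<bullet> b"
  define c where "c = a \<bullet> b"
  define k where "k = th \<bullet> th"
  define Gs where "Gs x = rho (x - s - c) + rho (x + s - c)" for x
  define H where "H z = rho (z \<bullet> b + s - c) - rho (z \<bullet> b - s - c)" for z :: 'a
  have pw: "(f (z - th) + f (z + th)) / 2 = (1/2) * ((z \<bullet> th) * Gs (z \<bullet> b)) + (k/2) * H z" for z
  proof -
    have e: "(z - th - a) \<bullet> b = z \<bullet> b - s - c" "(z + th - a) \<bullet> b = z \<bullet> b + s - c"
      "(z - th) \<bullet> th = z \<bullet> th - k" "(z + th) \<bullet> th = z \<bullet> th + k"
      unfolding s_def c_def k_def by (simp_all add: inner_diff_left inner_add_left)
    define A where "A = rho (z \<bullet> b - s - c)"
    define B where "B = rho (z \<bullet> b + s - c)"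
    have f1: "f (z - th) = A * (z \<bullet> th - k)" unfolding f_def e A_def by (rule refl)
    have f2: "f (z + th) = B * (z \<bullet> th + k)" unfolding f_def e B_def by (rule refl)
    have g1: "Gs (z \<bullet> b) = A + B" unfolding Gs_def A_def B_def by (rule refl)
    have h1: "H z = B - A" unfolding H_def A_def B_def by (rule refl)
    show ?thesis unfolding f1 f2 g1 h1 by (simp add: field_simps)
  qed
  have cGs: "continuous_on UNIV Gs" unfolding Gs_def[abs_def] by (intro continuous_intros)
  have mGs: "mono Gs" unfolding Gs_def[abs_def] by (intro monoI add_mono rho_mono) auto
  have Gs0: "0 \<le> Gs x" for x unfolding Gs_def using rho_pos[of "x - s - c"] rho_pos[of "x + s - c"] by simp
  have Gs2: "Gs x \<le> 2" for x unfolding Gs_def using rho_lt1[of "x - s - c"] rho_lt1[of "x + s - c"] by simp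
  have cT1: "continuous_on UNIV (\<lambda>z::'a. (z \<bullet> th) * Gs (z \<bullet> b))"
    by (intro continuous_intros continuous_on_compose2[OF cGs]) auto
  have bT1: "\<bar>(z \<bullet> th) * Gs (z \<bullet> b)\<bar> \<le> 0 + (2 * norm th) * norm z" for z :: 'a
  proof -
    have "\<bar>(z \<bullet> th) * Gs (z \<bullet> b)\<bar> = \<bar>z \<bullet> th\<bar> * Gs (z \<bullet> b)" using Gs0 by (simp add: abs_mult)
    also have "\<dots> \<le> (norm z * norm th) * 2"
      using Cauchy_Schwarz_ineq2[of z th] Gs0 Gs2 by (intro mult_mono) auto
    finally show ?thesis by (simp add: algebra_simps)
  qed
  have iT1: "integrable lborel (\<lambda>z::'a. std_gauss z * ((z \<bullet> th) * Gs (z \<bullet> b)))"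
    by (rule intgR[OF cT1 bT1]) simp
  have cH: "continuous_on UNIV H" unfolding H_def[abs_def] by (intro continuous_intros)
  have bH: "\<bar>H z\<bar> \<le> 1 + 0 * norm z" for z
    unfolding H_def using rho_pos[of "z \<bullet> b + s - c"] rho_lt1[of "z \<bullet> b + s - c"]
      rho_pos[of "z \<bullet> b - s - c"] rho_lt1[of "z \<bullet> b - s - c"] by simp
  have iH: "integrable lborel (\<lambda>z. std_gauss z * H z)" by (rule intgR[OF cH bH]) simp
  define T1 where "T1 = (\<integral>z. std_gauss z * ((z \<bullet> th) * Gs (z \<bullet> b)) \<partial>lborel)"
  define T2 where "T2 = (\<integral>z. std_gauss z * H z \<partial>lborel)"
  have "em_q th a b \<bullet> th = (\<integral>z. (1/2) * (std_gauss z * ((z \<bullet> th) * Gs (z \<bullet> b))) + (k/2) * (std_gauss z * H z) \<partial>lborel)"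
    unfolding rep pw by (simp add: algebra_simps)
  also have "\<dots> = (1/2) * T1 + (k/2) * T2"
    unfolding T1_def T2_def using iT1 iH by simp
  finally have q: "em_q th a b \<bullet> th = (1/2) * T1 + (k/2) * T2" .
  have T1pos: "0 \<le> s \<Longrightarrow> 0 \<le> T1" unfolding T1_def
    by (rule tilt[OF cGs mGs Gs0 Gs2]) (simp add: s_def inner_commute)
  have T1neg: "s \<le> 0 \<Longrightarrow> T1 \<le> 0"
  proof -
    assume s0: "s \<le> 0"
    have "0 \<le> (\<integral>z. std_gauss z * ((z \<bullet> (- th)) * Gs (z \<bullet> b)) \<partial>lborel)"
      by (rule tilt[OF cGs mGs Gs0 Gs2]) (use s0 in \<open>simp add: s_def inner_commute\<close>)
    then show "T1 \<le> 0" unfolding T1_def by simp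
  qed
  have k0: "0 \<le> k" unfolding k_def by simp
  have kpos: "s \<noteq> 0 \<Longrightarrow> 0 < k" unfolding k_def s_def by auto
  consider "0 < s" | "s < 0" | "s = 0" by linarith
  then show ?thesis
  proof cases
    case 1
    have "0 < H z" for z unfolding H_def using rho_strict[of "z \<bullet> b - s - c" "z \<bullet> b + s - c"] 1 by simp
    then have "0 < T2" unfolding T2_def
      by (intro posint[of _ 0] continuous_intros cH iH) (auto simp: g_pos less_imp_le)
    moreover have "0 < k" using kpos 1 by simp
    moreover have "0 \<le> T1" using T1pos 1 by simp
    ultimately have "0 < (k/2) * T2" "0 \<le> (1/2) * T1" by simp_all
    then have "0 < em_q th a b \<bullet> th" unfolding q by linarith
    then show ?thesis using 1 s_def by simp
  next
    case 2
    have neg: "std_gauss z * H z < 0" for z unfolding H_def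
      using rho_strict[of "z \<bullet> b + s - c" "z \<bullet> b - s - c"] 2 g_pos[of z] by (simp add: mult_pos_neg)
    have "0 < (\<integral>z. - (std_gauss z * H z) \<partial>lborel)"
    proof (rule posint[of _ 0])
      show "continuous_on UNIV (\<lambda>z. - (std_gauss z * H z))" by (intro continuous_intros cH)
      show "integrable lborel (\<lambda>z. - (std_gauss z * H z))" using iH by simp
    qed (use neg in \<open>auto simp: less_imp_le\<close>)
    then have "T2 < 0" unfolding T2_def by simp
    moreover have "0 < k" using kpos 2 by simp
    moreover have "T1 \<le> 0" using T1neg 2 by simp
    ultimately have "(k/2) * T2 < 0" "(1/2) * T1 \<le> 0" by (simp_all add: mult_pos_neg)
    then have "em_q th a b \<bullet> th < 0" unfolding q by linarith
    then show ?thesis using 2 s_def by simp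
  next
    case 3
    have "H z = 0" for z unfolding H_def 3 by simp
    then have "T2 = 0" unfolding T2_def by simp
    moreover have "T1 = 0" using T1pos T1neg 3 by simp
    ultimately have "em_q th a b \<bullet> th = 0" unfolding q by simp
    then have "sgn (em_q th a b \<bullet> th) = 0" by (metis sgn_zero)
    then show ?thesis using 3 s_def by simp
  qed
qed



theorem lemma4:
  fixes theta :: "'a::euclidean_space"
    and a b q :: "nat \<Rightarrow> 'a" and p :: "nat \<Rightarrow> real"
  assumes q_def: "\<And>t. q (Suc t) = em_q theta (a t) (b t)"
    and p_def: "\<And>t. p (Suc t) = em_p theta (a t) (b t)"
    and a_def: "\<And>t. a (Suc t) = ((1 - 2 * p (Suc t)) / (2 * p (Suc t) * (1 - p (Suc t)))) *\<^sub>R q (Suc t)"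
    and b_def: "\<And>t. b (Suc t) = (1 / (2 * p (Suc t) * (1 - p (Suc t)))) *\<^sub>R q (Suc t)"
  shows "\<forall>t. sgn (a t \<bullet> b t) = sgn (a (Suc t) \<bullet> b (Suc t))
           \<and> sgn (a (Suc t) \<bullet> b (Suc t)) = sgn (1/2 - p (Suc t))
           \<and> sgn (b t \<bullet> theta) = sgn (b (Suc t) \<bullet> theta)"
proof (intro allI)
  fix t
  define p1 where "p1 = p (Suc t)"
  define q1 where "q1 = q (Suc t)"
  define D where "D = 2 * p1 * (1 - p1)"
  have p1e: "p1 = em_p theta (a t) (b t)" unfolding p1_def by (rule p_def)
  have q1e: "q1 = em_q theta (a t) (b t)" unfolding q1_def by (rule q_def)
  have p0: "0 < p1" "p1 < 1" "sgn (1/2 - p1) = sgn (a t \<bullet> b t)"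
    unfolding p1e by (rule p_props)+
  have D0: "0 < D" unfolding D_def using p0 by simp
  have ae: "a (Suc t) = ((1 - 2 * p1) / D) *\<^sub>R q1" unfolding p1_def q1_def D_def by (rule a_def)
  have be: "b (Suc t) = (1 / D) *\<^sub>R q1" unfolding p1_def q1_def D_def by (rule b_def)
  have ab1: "a (Suc t) \<bullet> b (Suc t) = (1 - 2 * p1) * ((q1 \<bullet> q1) / (D * D))"
    unfolding ae be by (simp add: field_simps)
  have part2: "sgn (a (Suc t) \<bullet> b (Suc t)) = sgn (1/2 - p1)"
  proof (cases "b t = 0")
    case True
    then have "sgn (1/2 - p1) = 0" using p0(3) by simp
    then have "1/2 - p1 = 0" by (simp add: sgn_0_0)
    then have "1 - 2 * p1 = 0" by simp
    then have "a (Suc t) \<bullet> b (Suc t) = 0" unfolding ab1 by simp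
    then show ?thesis using \<open>1/2 - p1 = 0\<close> by (metis sgn_zero)
  next
    case False
    have "0 < q1 \<bullet> b t" unfolding q1e by (rule qb_pos[OF False])
    then have "q1 \<noteq> 0" by auto
    then have "0 < (q1 \<bullet> q1) / (D * D)" using D0 by simp
    then have "sgn ((q1 \<bullet> q1) / (D * D)) = 1" by (metis sgn_pos)
    moreover have "sgn (1 - 2 * p1) = sgn (1/2 - p1)"
    proof -
      have "sgn (1 - 2 * p1) = sgn (2 * (1/2 - p1))" by simp
      also have "\<dots> = sgn (2::real) * sgn (1/2 - p1)" by (rule sgn_mult)
      finally show ?thesis by simp
    qed
    ultimately show ?thesis unfolding ab1 by (metis sgn_mult mult_1_right)
  qed
  have part3: "sgn (b t \<bullet> theta) = sgn (b (Suc t) \<bullet> theta)"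
  proof -
    have "b (Suc t) \<bullet> theta = (1 / D) * (q1 \<bullet> theta)" unfolding be by simp
    then have "sgn (b (Suc t) \<bullet> theta) = sgn (q1 \<bullet> theta)" using D0 by (simp add: sgn_mult)
    also have "\<dots> = sgn (theta \<bullet> b t)" unfolding q1e by (rule qth_sgn)
    finally show ?thesis by (simp add: inner_commute)
  qed
  show "sgn (a t \<bullet> b t) = sgn (a (Suc t) \<bullet> b (Suc t))
           \<and> sgn (a (Suc t) \<bullet> b (Suc t)) = sgn (1/2 - p (Suc t))
           \<and> sgn (b t \<bullet> theta) = sgn (b (Suc t) \<bullet> theta)"
    using part2 part3 p0(3) unfolding p1_def by simp
qed

end
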